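(* Let $\rho\colon\mathcal{F}\to[\Lambda]^\omega$ with $\mathcal{F}\subseteq[\Omega]^\omega$ be a partition regular function. Consider the conditions: (1) $\mathrm{FinBW}(\rho)$ coincides with the class of all finite (Hausdorff) spaces; (2) $\omega+1\notin\mathrm{FinBW}(\rho)$, where the ordinal $\omega+1$ carries the order topology; (3) $\rho\notin P^-(\Lambda)$; (4) $\rho_{\mathrm{FIN}^2}\leq_K\rho$. Then (1), (2), (3) are equivalent and (4) implies them. If moreover $\rho\in(S_1)$, then all four conditions are equivalent.
   Context: All topological spaces are Hausdorff. An ideal on a nonempty set $X$ is a family $\mathcal{I}\subseteq\mathcal{P}(X)$ with $\emptyset\in\mathcal{I}$, $X\notin\mathcal{I}$, closed under finite unions and subsets, containing all finite subsets of $X$; $\mathcal{I}^+=\mathcal{P}(X)\setminus\mathcal{I}$. Partition regular function: $\Lambda,\Omega$ countably infinite, $\mathcal{F}$ a nonempty family of infinite subsets of $\Omega$ with $F\setminus K\in\mathcal{F}$ for $F\in\mathcal{F}$, $K$ finite; $\rho\colon\mathcal{F}\to[\Lambda]^\omega$ is partition regular if (M) $E\subseteq F\Rightarrow\rho(E)\subseteq\rho(F)$; (R) if $F\in\mathcal{F}$ and $\rho(F)=A\cup B$ then some $E\in\mathcal{F}$ has $\rho(E)\subseteq A$ or $\rho(E)\subseteq B$; (S) for every $E\in\mathcal{F}$ there is $F\in\mathcal{F}$, $F\subseteq E$, such that every $a\in\rho(F)$ satisfies $a\notin\rho(F\setminus K)$ for some finite $K\subseteq\Omega$. $\mathcal{I}_\rho=\{A\subseteq\Lambda:\forall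 F\in\mathcal{F}\ \rho(F)\not\subseteq A\}$. For an ideal $\mathcal{I}$ on $\Lambda$, $\rho_{\mathcal{I}}\colon\mathcal{I}^+\to[\Lambda]^\omega$, $\rho_{\mathcal{I}}(A)=A$ (with $\Omega=\Lambda$). $\rho$-convergence: for $f\colon\Lambda\to X$ and $F\in\mathcal{F}$, $f\restriction\rho(F)$ $\rho$-converges to $x\in X$ if for every neighborhood $U$ of $x$ there is a finite $K\subseteq\Omega$ with $f[\rho(F\setminus K)]\subseteq U$. $\mathrm{FinBW}(\rho)$ is the class of spaces $X$ such that for every $f\colon\Lambda\to X$ there is $F\in\mathcal{F}$ such that $f\restriction\rho(F)$ $\rho$-converges to some point of $X$. Katětov order: for partition regular $\rho_i\colon\mathcal{F}_i\to[\Lambda_i]^\omega$, $\mathcal{F}_i\subseteq[\Omega_i]^\omega$, write $\rho_2\leq_K\rho_1$ if there is $f\colon\Lambda_1\to\Lambda_2$ such that for every $F_1\in\mathcal{F}_1$ there is $F_2\in\mathcal{F}_2$ such that for every finite $K_1\subseteq\Omega_1$ there is a finite $K_2\subseteq\Omega_2$ with $\rho_2(F_2\setminus K_2)\subseteq f[\rho_1(F_1\setminus K_1)]$. $\mathrm{FIN}^2$ is the ideal on $\omega\times\omega$: $A\in\mathrm{FIN}^2$ iff there is $i_0$ such that $\{j:(i,j)\in A\}$ is finite for all $i\geq i_0$. $\rho\in P^-(\Lambda)$ means: for every decreasing sequence $\Lambda=A_0\supseteq A_1\supseteq\dots$ with $A_n\setminus A_{n+1}\in\mathcal{I}_\rho$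 for all $n$, there is $F\in\mathcal{F}$ such that for each $n$ there is a finite $K\subseteq\Omega$ with $\rho(F\setminus K)\subseteq A_n$. $\rho\in(S_1)$ means: for every $E\in\mathcal{F}$ there is $F\in\mathcal{F}$, $F\subseteq E$, such that for every $A\in\mathcal{I}_\rho$ there is $G\in\mathcal{F}$ with $\rho(G)\subseteq\rho(F)\setminus A$ and for every finite $K\subseteq\Omega$ there is a finite $L\subseteq\Omega$ with $\rho(G\setminus L)\subseteq\rho(F\setminus K)$. *)

theory Defs
  imports "HOL-Analysis.Analysis" "HOL-Library.Extended_Real"
begin

text \<open>Lambda = UNIV :: 'l set, Omega = UNIV :: 'o set (countably infinite types);
  the family F :: 'o set set and rho :: 'o set => 'l set.\<close>

definition partition_regular :: "'o set set \<Rightarrow> ('o set \<Rightarrow> 'l set) \<Rightarrow> bool" where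
  "partition_regular FF \<rho> \<longleftrightarrow>
     FF \<noteq> {} \<and> (\<forall>F\<in>FF. infinite F) \<and>
     (\<forall>F\<in>FF. \<forall>K. finite K \<longrightarrow> F - K \<in> FF) \<and>
     (\<forall>F\<in>FF. infinite (\<rho> F)) \<and>
     (\<forall>E\<in>FF. \<forall>F\<in>FF. E \<subseteq> F \<longrightarrow> \<rho> E \<subseteq> \<rho> F) \<and>
     (\<forall>F\<in>FF. \<forall>A B. \<rho> F = A \<union> B \<longrightarrow> (\<exists>E\<in>FF. \<rho> E \<subseteq> A \<or> \<rho> E \<subseteq> B)) \<and>
     (\<forall>E\<in>FF. \<exists>F\<in>FF. F \<subseteq> E \<and> (\<forall>a\<in>\<rho> F. \<exists>K. finite K \<and> a \<notin> \<rho> (F - K)))"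

definition ideal_of :: "'o set set \<Rightarrow> ('o set \<Rightarrow> 'l set) \<Rightarrow> 'l set set" where
  "ideal_of FF \<rho> = {A. \<forall>F\<in>FF. \<not> \<rho> F \<subseteq> A}"

definition rho_converges ::
  "'o set set \<Rightarrow> ('o set \<Rightarrow> 'l set) \<Rightarrow> 'x topology \<Rightarrow> ('l \<Rightarrow> 'x) \<Rightarrow> 'o set \<Rightarrow> 'x \<Rightarrow> bool" where
  "rho_converges FF \<rho> X f F x \<longleftrightarrow>
     (\<forall>U. openin X U \<and> x \<in> U \<longrightarrow> (\<exists>K. finite K \<and> f ` \<rho> (F - K) \<subseteq> U))"

definition FinBW :: "'o set set \<Rightarrow> ('o set \<Rightarrow> 'l set) \<Rightarrow> 'x topology \<Rightarrow> bool" where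
  "FinBW FF \<rho> X \<longleftrightarrow>
     (\<forall>f. f ` UNIV \<subseteq> topspace X \<longrightarrow>
        (\<exists>F\<in>FF. \<exists>x\<in>topspace X. rho_converges FF \<rho> X f F x))"

definition katetov_le ::
  "'o2 set set \<Rightarrow> ('o2 set \<Rightarrow> 'l2 set) \<Rightarrow> 'o1 set set \<Rightarrow> ('o1 set \<Rightarrow> 'l1 set) \<Rightarrow> bool" where
  "katetov_le FF2 \<rho>2 FF1 \<rho>1 \<longleftrightarrow>
     (\<exists>f :: 'l1 \<Rightarrow> 'l2. \<forall>F1\<in>FF1. \<exists>F2\<in>FF2. \<forall>K1. finite K1 \<longrightarrow>
        (\<exists>K2. finite K2 \<and> \<rho>2 (F2 - K2) \<subseteq> f ` \<rho>1 (F1 - K1)))"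

definition FIN2 :: "(nat \<times> nat) set set" where
  "FIN2 = {A. \<exists>i0. \<forall>i\<ge>i0. finite {j. (i, j) \<in> A}}"

text \<open>rho_FIN2 : FIN2^+ -> [omega x omega]^omega, the identity.\<close>
definition FIN2_plus :: "(nat \<times> nat) set set" where
  "FIN2_plus = {A. A \<notin> FIN2}"

definition P_minus :: "'o set set \<Rightarrow> ('o set \<Rightarrow> 'l set) \<Rightarrow> bool" where
  "P_minus FF \<rho> \<longleftrightarrow>
     (\<forall>A :: nat \<Rightarrow> 'l set. A 0 = UNIV \<and> (\<forall>n. A (Suc n) \<subseteq> A n) \<and>
        (\<forall>n. A n - A (Suc n) \<in> ideal_of FF \<rho>) \<longrightarrow>
        (\<exists>F\<in>FF. \<forall>n. \<exists>K. finite K \<and> \<rho> (F - K) \<subseteq> A n))"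

definition S1 :: "'o set set \<Rightarrow> ('o set \<Rightarrow> 'l set) \<Rightarrow> bool" where
  "S1 FF \<rho> \<longleftrightarrow>
     (\<forall>E\<in>FF. \<exists>F\<in>FF. F \<subseteq> E \<and>
        (\<forall>A\<in>ideal_of FF \<rho>. \<exists>G\<in>FF. \<rho> G \<subseteq> \<rho> F - A \<and>
           (\<forall>K. finite K \<longrightarrow> (\<exists>L. finite L \<and> \<rho> (G - L) \<subseteq> \<rho> (F - K)))))"

end

theory Submission
  imports Defs
begin

locale prloc =
  fixes FF :: "'o::countable set set" and \<rho> :: "'o set \<Rightarrow> 'l::countable set"
  assumes pr: "partition_regular FF \<rho>"
begin

lemma prD: "FF \<noteq> {} \<and> (\<forall>F\<in>FF. infinite F) \<and>
     (\<forall>F\<in>FF. \<forall>K. finite K \<longrightarrow> F - K \<in> FF) \<and>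
     (\<forall>F\<in>FF. infinite (\<rho> F)) \<and>
     (\<forall>E\<in>FF. \<forall>F\<in>FF. E \<subseteq> F \<longrightarrow> \<rho> E \<subseteq> \<rho> F) \<and>
     (\<forall>F\<in>FF. \<forall>A B. \<rho> F = A \<union> B \<longrightarrow> (\<exists>E\<in>FF. \<rho> E \<subseteq> A \<or> \<rho> E \<subseteq> B)) \<and>
     (\<forall>E\<in>FF. \<exists>F\<in>FF. F \<subseteq> E \<and> (\<forall>a\<in>\<rho> F. \<exists>K. finite K \<and> a \<notin> \<rho> (F - K)))"
  using pr unfolding partition_regular_def by assumption

lemma FF_ne: "FF \<noteq> {}" using prD by (rule conjunct1)
lemma FF_inf: "F \<in> FF \<Longrightarrow> infinite (\<rho> F)"
  using prD[THEN conjunct2, THEN conjunct2, THEN conjunct2, THEN conjunct1] by (rule bspec)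
lemma FF_diff: "F \<in> FF \<Longrightarrow> finite K \<Longrightarrow> F - K \<in> FF"
  using prD[THEN conjunct2, THEN conjunct2, THEN conjunct1] by simp
lemma mono: "E \<in> FF \<Longrightarrow> F \<in> FF \<Longrightarrow> E \<subseteq> F \<Longrightarrow> \<rho> E \<subseteq> \<rho> F"
  using prD[THEN conjunct2, THEN conjunct2, THEN conjunct2, THEN conjunct2, THEN conjunct1] by simp
lemma R: "F \<in> FF \<Longrightarrow> \<rho> F = A \<union> B \<Longrightarrow> \<exists>E\<in>FF. \<rho> E \<subseteq> A \<or> \<rho> E \<subseteq> B"
  using prD[THEN conjunct2, THEN conjunct2, THEN conjunct2, THEN conjunct2, THEN conjunct2, THEN conjunct1] by simp
lemma S: "E \<in> FF \<Longrightarrow> \<exists>F\<in>FF. F \<subseteq> E \<and> (\<forall>a\<in>\<rho> F. \<exists>K. finite K \<and> a \<notin> \<rho> (F - K))"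
  using prD[THEN conjunct2, THEN conjunct2, THEN conjunct2, THEN conjunct2, THEN conjunct2, THEN conjunct2] by simp

lemma mono_diff: "F \<in> FF \<Longrightarrow> finite K \<Longrightarrow> finite L \<Longrightarrow> K \<subseteq> L \<Longrightarrow> \<rho> (F - L) \<subseteq> \<rho> (F - K)"
  by (rule mono) (auto intro: FF_diff)

lemma I_sub: "B \<in> ideal_of FF \<rho> \<Longrightarrow> A \<subseteq> B \<Longrightarrow> A \<in> ideal_of FF \<rho>"
  unfolding ideal_of_def by blast

lemma I_Un: assumes "A \<in> ideal_of FF \<rho>" "B \<in> ideal_of FF \<rho>" shows "A \<union> B \<in> ideal_of FF \<rho>"
  unfolding ideal_of_def
proof (intro CollectI ballI notI)
  fix F assume F: "F \<in> FF" "\<rho> F \<subseteq> A \<union> B"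
  then have "\<rho> F = (\<rho> F \<inter> A) \<union> (\<rho> F \<inter> B)" by blast
  from R[OF F(1) this] obtain E where "E \<in> FF" "\<rho> E \<subseteq> A \<or> \<rho> E \<subseteq> B" by blast
  then show False using assms unfolding ideal_of_def by blast
qed

lemma I_notin: "F \<in> FF \<Longrightarrow> \<rho> F \<subseteq> A \<Longrightarrow> A \<in> ideal_of FF \<rho> \<Longrightarrow> False"
  unfolding ideal_of_def by blast

lemma finite_const:
  assumes "finite S" "F \<in> FF" "g ` \<rho> F \<subseteq> S"
  shows "\<exists>E\<in>FF. \<exists>x\<in>S. g ` \<rho> E \<subseteq> {x}"
  using assms
proof (induction S arbitrary: F rule: finite_induct)
  case empty
  then show ?case using FF_inf[OF empty(1)] by auto
next
  case (insert x S)
  have "\<rho> F = (\<rho> F \<inter> g -` {x}) \<union> (\<rho> F \<inter> g -` S)" using insert by blast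
  from R[OF insert(4) this] obtain E where E: "E \<in> FF" "\<rho> E \<subseteq> \<rho> F \<inter> g -` {x} \<or> \<rho> E \<subseteq> \<rho> F \<inter> g -` S" by blast
  show ?case
  proof (cases "\<rho> E \<subseteq> \<rho> F \<inter> g -` {x}")
    case True then show ?thesis using E by blast
  next
    case False
    then have "g ` \<rho> E \<subseteq> S" using E by blast
    from insert.IH[OF E(1) this] show ?thesis by blast
  qed
qed

lemma finite_FinBW:
  fixes X :: "'x topology"
  assumes "finite (topspace X)"
  shows "FinBW FF \<rho> X"
  unfolding FinBW_def
proof (intro allI impI)
  fix f :: "'l \<Rightarrow> 'x" assume f: "f ` UNIV \<subseteq> topspace X"
  obtain F where F: "F \<in> FF" using FF_ne by blast
  from finite_const[OF assms F] f obtain E x where "E \<in> FF" "x \<in> topspace X" "f ` \<rho> E \<subseteq> {x}" by blast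
  then show "\<exists>F\<in>FF. \<exists>x\<in>topspace X. rho_converges FF \<rho> X f F x"
    unfolding rho_converges_def by (intro bexI[of _ E] bexI[of _ x]) (auto intro!: exI[of _ "{}"] simp: image_subset_iff)
qed


end

definition CC :: "(nat \<Rightarrow> 'l set) \<Rightarrow> 'l set" where "CC A = {a. \<forall>n. a \<in> A n}"
definition lev :: "(nat \<Rightarrow> 'l set) \<Rightarrow> 'l \<Rightarrow> nat" where
  "lev A a = (if a \<in> CC A then 0 else LEAST n. a \<notin> A (Suc n))"

lemma dec_le: assumes "\<forall>n. A (Suc n) \<subseteq> A n" "m \<le> n" shows "A n \<subseteq> A m"
  using assms(2) by (induction n rule: dec_induct) (use assms(1) in auto)

lemma lev_gt: assumes "n < lev A a" shows "a \<in> A (Suc n)"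
proof (cases "a \<in> CC A")
  case True then show ?thesis by (simp add: CC_def)
next
  case False then show ?thesis using assms not_less_Least[of n "\<lambda>n. a \<notin> A (Suc n)"] by (simp add: lev_def)
qed

lemma lev_le: assumes "a \<notin> A (Suc n)" shows "lev A a \<le> n"
  using assms by (auto simp: lev_def CC_def intro: Least_le)

lemma lev_notC: assumes "A 0 = UNIV" "a \<notin> CC A" shows "a \<notin> A (Suc (lev A a))"
proof -
  obtain n where "a \<notin> A n" using assms(2) by (auto simp: CC_def)
  then have "n \<noteq> 0" using assms(1) by (metis UNIV_I)
  then obtain m where "a \<notin> A (Suc m)" using \<open>a \<notin> A n\<close> by (cases n) auto
  then show ?thesis using assms(2) by (simp add: lev_def) (rule LeastI)
qed

lemma lev_ge: assumes "A 0 = UNIV" "\<forall>n. A (Suc n) \<subseteq> A n" "a \<in> A n" "a \<notin> CC A" shows "n \<le> lev A a"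
proof (rule ccontr)
  assume "\<not> n \<le> lev A a"
  then have "A n \<subseteq> A (Suc (lev A a))" using dec_le[OF assms(2)] by simp
  then show False using lev_notC[OF assms(1,4)] assms(3) by blast
qed

lemma lev_eq: assumes "A 0 = UNIV" "\<forall>n. A (Suc n) \<subseteq> A n"
  shows "{a. lev A a = m} \<subseteq> (A m - A (Suc m)) \<union> CC A"
proof
  fix a assume a: "a \<in> {a. lev A a = m}"
  show "a \<in> (A m - A (Suc m)) \<union> CC A"
  proof (cases "a \<in> CC A")
    case False
    have "a \<notin> A (Suc m)" using lev_notC[OF assms(1) False] a by simp
    moreover have "a \<in> A m"
    proof (cases m)
      case 0 then show ?thesis using assms(1) by simp
    next
      case (Suc k) then show ?thesis using lev_gt[of k A a] a by simp
    qed
    ultimately show ?thesis by blast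
  qed simp
qed

context prloc begin

definition witness :: "(nat \<Rightarrow> 'l set) \<Rightarrow> bool" where
  "witness A \<longleftrightarrow> A 0 = UNIV \<and> (\<forall>n. A (Suc n) \<subseteq> A n) \<and> (\<forall>n. A n - A (Suc n) \<in> ideal_of FF \<rho>) \<and>
     \<not> (\<exists>F\<in>FF. \<forall>n. \<exists>K. finite K \<and> \<rho> (F - K) \<subseteq> A n)"

lemma notP_witness: "\<not> P_minus FF \<rho> \<longleftrightarrow> (\<exists>A. witness A)"
  unfolding P_minus_def witness_def by blast

lemma CC_I: assumes "witness A" shows "CC A \<in> ideal_of FF \<rho>"
  unfolding ideal_of_def
proof (intro CollectI ballI notI)
  fix F assume F: "F \<in> FF" "\<rho> F \<subseteq> CC A"
  then have "\<forall>n. \<exists>K. finite K \<and> \<rho> (F - K) \<subseteq> A n"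
    by (intro allI exI[of _ "{}"]) (auto simp: CC_def)
  then show False using assms F(1) unfolding witness_def by blast
qed

lemma compl_I: assumes "witness A" shows "UNIV - A n \<in> ideal_of FF \<rho>"
proof (induction n)
  case 0
  have "UNIV - A 0 = {}" using assms unfolding witness_def by simp
  moreover have "{} \<in> ideal_of FF \<rho>" using FF_inf unfolding ideal_of_def by fastforce
  ultimately show ?case by metis
next
  case (Suc n)
  have "UNIV - A (Suc n) = (UNIV - A n) \<union> (A n - A (Suc n))" using assms unfolding witness_def by blast
  then show ?case using Suc I_Un assms unfolding witness_def by metis
qed

lemma fiber_I: assumes "witness A" shows "{a. lev A a = m} \<in> ideal_of FF \<rho>"
  using I_sub[OF I_Un lev_eq] assms CC_I unfolding witness_def by blast

lemma witnessD:
  assumes "witness A"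
  shows "A 0 = UNIV" "\<And>n. A (Suc n) \<subseteq> A n" "\<And>n. A n - A (Suc n) \<in> ideal_of FF \<rho>"
    "\<And>F. F \<in> FF \<Longrightarrow> \<forall>n. \<exists>K. finite K \<and> \<rho> (F - K) \<subseteq> A n \<Longrightarrow> False"
  using assms unfolding witness_def by (blast, blast, blast, blast)

lemma c3_c2: assumes "\<not> P_minus FF \<rho>" shows "\<not> FinBW FF \<rho> (euclidean :: enat topology)"
proof
  obtain A where W: "witness A" using assms notP_witness by blast
  define g where "g a = (if a \<in> CC A then \<infinity> else enat (lev A a))" for a
  assume "FinBW FF \<rho> (euclidean :: enat topology)"
  then have "\<exists>F\<in>FF. \<exists>x\<in>topspace euclidean. rho_converges FF \<rho> euclidean g F x"
    unfolding FinBW_def by (drule_tac spec[of _ g]) simp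
  then obtain F x where F: "F \<in> FF" and conv: "rho_converges FF \<rho> euclidean g F x"
    by blast
  have cv: "\<exists>K. finite K \<and> g ` \<rho> (F - K) \<subseteq> U" if "open U" "x \<in> U" for U
    using conv that unfolding rho_converges_def by simp
  show False
  proof (cases x)
    case (enat m)
    have "x \<in> {enat m}" using enat by simp
    from cv[OF open_enat this] obtain K where K: "finite K" "g ` \<rho> (F - K) \<subseteq> {enat m}"
      by blast
    have "\<rho> (F - K) \<subseteq> {a. lev A a = m}"
    proof
      fix a assume a: "a \<in> \<rho> (F - K)"
      show "a \<in> {a. lev A a = m}" using K(2) a by (cases "a \<in> CC A") (auto simp: g_def)
    qed
    show False using I_notin[OF FF_diff[OF F K(1)] \<open>\<rho> (F - K) \<subseteq> {a. lev A a = m}\<close> fiber_I[OF W]] .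
  next
    case infinity
    have "\<exists>K. finite K \<and> \<rho> (F - K) \<subseteq> A n" for n
    proof -
      have "open ({enat n <..} :: enat set)" by simp
      moreover have "x \<in> {enat n <..}" using infinity by simp
      ultimately obtain K where K0: "finite K" "g ` \<rho> (F - K) \<subseteq> {enat n <..}"
        using cv by blast
      have K: "a \<in> CC A \<or> n < lev A a" if "a \<in> \<rho> (F - K)" for a
        using K0(2) that by (cases "a \<in> CC A") (auto simp: g_def)
      have "\<rho> (F - K) \<subseteq> A n"
      proof
        fix a assume "a \<in> \<rho> (F - K)"
        then consider "a \<in> CC A" | "n < lev A a" using K by blast
        then show "a \<in> A n"
        proof cases
          case 1 then show ?thesis by (simp add: CC_def)
        next
          case 2 then show ?thesis using lev_gt[OF 2] witnessD(2)[OF W, of n] by blast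
        qed
      qed
      then show ?thesis using K0(1) by blast
    qed
    then show False using witnessD(4)[OF W F] by blast
  qed
qed

lemma c2_c3: assumes "\<not> FinBW FF \<rho> (euclidean :: enat topology)" shows "\<not> P_minus FF \<rho>"
proof -
  obtain g :: "'l \<Rightarrow> enat" where g: "\<forall>F\<in>FF. \<forall>x. \<not> rho_converges FF \<rho> euclidean g F x"
    using assms unfolding FinBW_def by auto
  define A where "A n = {a. enat n \<le> g a}" for n
  have "witness A" unfolding witness_def
  proof (intro conjI allI)
    show "A 0 = UNIV" by (simp add: A_def zero_enat_def[symmetric])
    show "A (Suc n) \<subseteq> A n" for n by (auto simp: A_def) (metis Suc_ile_eq order_less_imp_le)
    show "A n - A (Suc n) \<in> ideal_of FF \<rho>" for n
      unfolding ideal_of_def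
    proof (intro CollectI ballI notI)
      fix F assume F: "F \<in> FF" "\<rho> F \<subseteq> A n - A (Suc n)"
      have "g ` \<rho> F \<subseteq> {enat n}"
      proof
        fix y assume "y \<in> g ` \<rho> F"
        then obtain a where "a \<in> \<rho> F" "y = g a" by blast
        then have "enat n \<le> y" "\<not> enat (Suc n) \<le> y" using F by (auto simp: A_def)
        then show "y \<in> {enat n}" by (cases y) auto
      qed
      then have "rho_converges FF \<rho> euclidean g F (enat n)"
        unfolding rho_converges_def by (auto intro!: exI[of _ "{}"] simp: image_subset_iff)
      then show False using g F by blast
    qed
    show "\<not> (\<exists>F\<in>FF. \<forall>n. \<exists>K. finite K \<and> \<rho> (F - K) \<subseteq> A n)"
    proof
      assume "\<exists>F\<in>FF. \<forall>n. \<exists>K. finite K \<and> \<rho> (F - K) \<subseteq> A n"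
      then obtain F where F: "F \<in> FF" "\<forall>n. \<exists>K. finite K \<and> \<rho> (F - K) \<subseteq> A n" by blast
      have "rho_converges FF \<rho> euclidean g F \<infinity>"
        unfolding rho_converges_def
      proof (intro allI impI)
        fix U :: "enat set" assume "openin euclidean U \<and> \<infinity> \<in> U"
        then obtain m :: nat where m: "{enat m <..} \<subseteq> U" using open_enat_iff by auto
        obtain K where "finite K" "\<rho> (F - K) \<subseteq> A (Suc m)" using F by blast
        moreover have "g ` A (Suc m) \<subseteq> {enat m <..}" by (auto simp: A_def Suc_ile_eq)
        ultimately show "\<exists>K. finite K \<and> g ` \<rho> (F - K) \<subseteq> U" using m by blast
      qed
      then show False using g F by blast
    qed
  qed
  then show ?thesis using notP_witness by blast
qed

lemma c4_c3: assumes "katetov_le FIN2_plus (\<lambda>A. A) FF \<rho>" shows "\<not> P_minus FF \<rho>"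
proof
  assume P: "P_minus FF \<rho>"
  obtain f :: "'l \<Rightarrow> nat \<times> nat" where f: "\<forall>F1\<in>FF. \<exists>F2\<in>FIN2_plus. \<forall>K1. finite K1 \<longrightarrow>
        (\<exists>K2. finite K2 \<and> F2 - K2 \<subseteq> f ` \<rho> (F1 - K1))"
    using assms unfolding katetov_le_def by blast
  have colfin: "finite {j. (i, j) \<in> F2}" if "F2 - K2 \<subseteq> S" "finite K2" "\<forall>p\<in>S. fst p \<noteq> i" for F2 K2 S i
  proof -
    have "{j. (i, j) \<in> F2} \<subseteq> snd ` K2" proof
      fix j assume "j \<in> {j. (i, j) \<in> F2}"
      then have "(i, j) \<in> K2" using that by fastforce
      then show "j \<in> snd ` K2" by (metis image_eqI snd_conv)
    qed
    then show ?thesis using finite_subset that(2) by blast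
  qed
  define A where "A n = {a. n \<le> fst (f a)}" for n
  have "A 0 = UNIV" "\<forall>n. A (Suc n) \<subseteq> A n" by (auto simp: A_def)
  moreover have "\<forall>n. A n - A (Suc n) \<in> ideal_of FF \<rho>"
  proof (intro allI, unfold ideal_of_def, intro CollectI ballI notI)
    fix n F assume F: "F \<in> FF" "\<rho> F \<subseteq> A n - A (Suc n)"
    then obtain F2 where F2: "F2 \<in> FIN2_plus" "\<forall>K1. finite K1 \<longrightarrow> (\<exists>K2. finite K2 \<and> F2 - K2 \<subseteq> f ` \<rho> (F - K1))"
      using f by blast
    then obtain K2 where K2: "finite K2" "F2 - K2 \<subseteq> f ` \<rho> F" by (metis Diff_empty finite.emptyI)
    have "\<forall>p\<in>f ` \<rho> F. fst p = n" using F(2) by (auto simp: A_def)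
    then have "\<forall>i\<ge>Suc n. finite {j. (i, j) \<in> F2}" using colfin[OF K2(2) K2(1)] by auto
    then show False using F2(1) by (auto simp: FIN2_plus_def FIN2_def)
  qed
  ultimately have "\<exists>F\<in>FF. \<forall>n. \<exists>K. finite K \<and> \<rho> (F - K) \<subseteq> A n"
    using P[unfolded P_minus_def, THEN spec[of _ A]] by simp
  then obtain F where F: "F \<in> FF" "\<forall>n. \<exists>K. finite K \<and> \<rho> (F - K) \<subseteq> A n"
    by blast
  then obtain F2 where F2: "F2 \<in> FIN2_plus" "\<forall>K1. finite K1 \<longrightarrow> (\<exists>K2. finite K2 \<and> F2 - K2 \<subseteq> f ` \<rho> (F - K1))"
    using f by blast
  have "finite {j. (i, j) \<in> F2}" for i
  proof -
    obtain K where K: "finite K" "\<rho> (F - K) \<subseteq> A (Suc i)" using F by blast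
    obtain K2 where K2: "finite K2" "F2 - K2 \<subseteq> f ` \<rho> (F - K)" using F2 K by blast
    have "\<forall>p\<in>f ` \<rho> (F - K). fst p \<noteq> i" using K(2) by (auto simp: A_def)
    then show ?thesis using colfin[OF K2(2) K2(1)] by blast
  qed
  then show False using F2(1) by (auto simp: FIN2_plus_def FIN2_def)
qed

end

lemma sep_step:
  assumes H: "Hausdorff_space X" and W: "openin X W" "infinite W"
  shows "\<exists>p N W'. p \<in> N \<and> openin X N \<and> N \<subseteq> W \<and> openin X W' \<and> W' \<subseteq> W \<and> infinite W' \<and> N \<inter> W' = {}"
proof -
  obtain p where p: "p \<in> W" using W(2) by (metis finite.emptyI ex_in_conv)
  have "infinite (W - {p})" using W(2) by simp
  then obtain q where q: "q \<in> W" "q \<noteq> p" by (metis Diff_iff finite.emptyI ex_in_conv singletonI)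
  have WX: "W \<subseteq> topspace X" using W(1) by (rule openin_subset)
  obtain U V where UV: "openin X U" "openin X V" "p \<in> U" "q \<in> V" "disjnt U V"
    using H p q WX unfolding Hausdorff_space_def by (metis subsetD)
  show ?thesis
  proof (cases "finite (U \<inter> W)")
    case False
    show ?thesis
      by (rule exI[of _ q], rule exI[of _ "V \<inter> W"], rule exI[of _ "U \<inter> W"])
        (use False UV q W in \<open>auto simp: disjnt_def openin_Int\<close>)
  next
    case True
    have "t1_space X" using H by (rule Hausdorff_imp_t1_space)
    then have "closedin X (U \<inter> W)" using True WX unfolding t1_space_closedin_finite by blast
    then have o: "openin X (W - (U \<inter> W))" using W(1) by (rule openin_diff[rotated])
    have inf: "infinite (W - (U \<inter> W))" using True W(2) by (metis Diff_Int2 Diff_Int_distrib Diff_infinite_finite Int_absorb)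
    show ?thesis
      by (rule exI[of _ p], rule exI[of _ "U \<inter> W"], rule exI[of _ "W - (U \<inter> W)"])
        (use o inf UV p W in \<open>auto simp: openin_Int\<close>)
  qed
qed

lemma discrete_seq:
  assumes H: "Hausdorff_space X" and inf: "infinite (topspace X)"
  shows "\<exists>x N. \<forall>n::nat. openin X (N n) \<and> x n \<in> N n \<and> x n \<in> topspace X \<and> (\<forall>m. m \<noteq> n \<longrightarrow> x m \<notin> N n)"
proof -
  define Q where "Q W t \<longleftrightarrow> (case t of (p, N, W') \<Rightarrow> p \<in> N \<and> openin X N \<and> N \<subseteq> W \<and> openin X W' \<and> W' \<subseteq> W \<and> infinite W' \<and> N \<inter> W' = {})" for W t
  define st where "st W = (SOME t. Q W t)" for W
  have stQ: "Q W (st W)" if wa: "openin X W" "infinite W" for W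
  proof -
    obtain p N W' where "p \<in> N \<and> openin X N \<and> N \<subseteq> W \<and> openin X W' \<and> W' \<subseteq> W \<and> infinite W' \<and> N \<inter> W' = {}"
      using sep_step[OF H wa] by blast
    then have "Q W (p, N, W')" by (simp add: Q_def)
    then show ?thesis unfolding st_def by (rule someI)
  qed
  define Ws where "Ws = rec_nat (topspace X) (\<lambda>_ W. snd (snd (st W)))"
  have Ws0: "Ws 0 = topspace X" and WsS: "Ws (Suc n) = snd (snd (st (Ws n)))" for n by (simp_all add: Ws_def)
  have Wsgood: "openin X (Ws n) \<and> infinite (Ws n)" for n
  proof (induction n)
    case 0 then show ?case using inf by (simp add: Ws0)
  next
    case (Suc n)
    have "Q (Ws n) (st (Ws n))" by (rule stQ) (use Suc.IH in simp_all)
    then show ?case by (simp add: WsS Q_def split: prod.splits)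
  qed
  define x where "x n = fst (st (Ws n))" for n
  define N where "N n = fst (snd (st (Ws n)))" for n
  have props: "x n \<in> N n \<and> openin X (N n) \<and> N n \<subseteq> Ws n \<and> Ws (Suc n) \<subseteq> Ws n \<and> N n \<inter> Ws (Suc n) = {}" for n
  proof -
    have "Q (Ws n) (st (Ws n))" by (rule stQ) (use Wsgood[of n] in simp_all)
    then show ?thesis by (simp add: WsS Q_def x_def N_def split: prod.splits)
  qed
  have decS: "\<forall>n. Ws (Suc n) \<subseteq> Ws n" using props by simp
  have dec: "m \<le> n \<Longrightarrow> Ws n \<subseteq> Ws m" for m n using dec_le[OF decS] .
  have "\<forall>n. openin X (N n) \<and> x n \<in> N n \<and> x n \<in> topspace X \<and> (\<forall>m. m \<noteq> n \<longrightarrow> x m \<notin> N n)"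
  proof (intro allI conjI impI)
    fix n
    show "openin X (N n)" "x n \<in> N n" using props[of n] by simp_all
    have "x n \<in> Ws n" using props[of n] by blast
    then show "x n \<in> topspace X" using dec[of 0 n] Ws0 by blast
    fix m assume "m \<noteq> n"
    then consider "n < m" | "m < n" by linarith
    then show "x m \<notin> N n"
    proof cases
      case 1
      then have "Ws m \<subseteq> Ws (Suc n)" using dec by simp
      then show ?thesis using props[of m] props[of n] by blast
    next
      case 2
      then have "Ws n \<subseteq> Ws (Suc m)" using dec by simp
      then show ?thesis using props[of m] props[of n] by blast
    qed
  qed
  then show ?thesis by (rule exI[of _ x, OF exI[of _ N]])
qed

context prloc begin

lemma infinite_not_FinBW:
  fixes X :: "'x topology"
  assumes W: "witness A" and H: "Hausdorff_space X" and inf: "infinite (topspace X)"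
  shows "\<not> FinBW FF \<rho> X"
proof
  obtain x N where xN0: "\<forall>n::nat. openin X (N n) \<and> x n \<in> N n \<and> x n \<in> topspace X \<and> (\<forall>m. m \<noteq> n \<longrightarrow> x m \<notin> N n)"
    using discrete_seq[OF H inf] by (elim exE)
  have xN: "\<And>n. openin X (N n)" "\<And>n. x n \<in> N n" "\<And>n. x n \<in> topspace X"
    "\<And>m n. m \<noteq> n \<Longrightarrow> x m \<notin> N n"
    using xN0 by simp_all
  define f where "f a = x (lev A a)" for a
  assume "FinBW FF \<rho> X"
  moreover have "f ` UNIV \<subseteq> topspace X" using xN(3) by (auto simp: f_def)
  ultimately have "\<exists>F\<in>FF. \<exists>y\<in>topspace X. rho_converges FF \<rho> X f F y"
    unfolding FinBW_def by simp
  then obtain F y where F: "F \<in> FF" "y \<in> topspace X" and conv: "rho_converges FF \<rho> X f F y"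
    by blast
  have cv: "\<exists>K. finite K \<and> f ` \<rho> (F - K) \<subseteq> U" if "openin X U" "y \<in> U" for U
    using conv that unfolding rho_converges_def by simp
  show False
  proof (cases "y \<in> range x")
    case True
    then obtain m where m: "y = x m" by blast
    from cv[OF xN(1)[of m]] obtain K where K: "finite K" "f ` \<rho> (F - K) \<subseteq> N m"
      using m xN(2) by blast
    have "\<rho> (F - K) \<subseteq> {a. lev A a = m}"
    proof
      fix a assume "a \<in> \<rho> (F - K)"
      then have "x (lev A a) \<in> N m" using K(2) by (auto simp: f_def)
      then show "a \<in> {a. lev A a = m}" using xN(4) by blast
    qed
    then show False using I_notin[OF FF_diff[OF F(1) K(1)] _ fiber_I[OF W]] by blast
  next
    case False
    have "\<exists>K. finite K \<and> \<rho> (F - K) \<subseteq> A n" for n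
    proof -
      have "t1_space X" using H by (rule Hausdorff_imp_t1_space)
      moreover have "finite (x ` {..n})" by simp
      moreover have "x ` {..n} \<subseteq> topspace X" using xN(3) by blast
      ultimately have "closedin X (x ` {..n})" unfolding t1_space_closedin_finite by simp
      then have o: "openin X (topspace X - x ` {..n})" by (rule openin_diff[OF openin_topspace])
      have "y \<in> topspace X - x ` {..n}" using F(2) False by blast
      from cv[OF o this] obtain K where K: "finite K" "f ` \<rho> (F - K) \<subseteq> topspace X - x ` {..n}"
        by blast
      have "\<rho> (F - K) \<subseteq> A n"
      proof
        fix a assume "a \<in> \<rho> (F - K)"
        then have nx: "x (lev A a) \<notin> x ` {..n}" using K(2) by (auto simp: f_def)
        have "n < lev A a"
        proof (rule ccontr)
          assume "\<not> n < lev A a"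
          then have "lev A a \<in> {..n}" by simp
          then show False using nx by blast
        qed
        then have "a \<in> A (Suc n)" by (rule lev_gt)
        then show "a \<in> A n" using witnessD(2)[OF W, of n] by blast
      qed
      then show ?thesis using K(1) by blast
    qed
    then show False using witnessD(4)[OF W F(1)] by blast
  qed
qed

lemma FinBW_image:
  fixes X :: "'x topology" and Y :: "'y topology"
  assumes c: "continuous_map X Y g" and s: "g ` topspace X = topspace Y" and B: "FinBW FF \<rho> X"
  shows "FinBW FF \<rho> Y"
  unfolding FinBW_def
proof (intro allI impI)
  fix f :: "'l \<Rightarrow> 'y" assume f: "f ` UNIV \<subseteq> topspace Y"
  define f' where "f' a = (SOME z. z \<in> topspace X \<and> g z = f a)" for a
  have f': "f' a \<in> topspace X \<and> g (f' a) = f a" for a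
  proof -
    have "f a \<in> g ` topspace X" using f s by blast
    then obtain z where "z \<in> topspace X \<and> g z = f a" by auto
    then show ?thesis unfolding f'_def by (rule someI)
  qed
  have "f' ` UNIV \<subseteq> topspace X" using f' by blast
  then have "\<exists>F\<in>FF. \<exists>x\<in>topspace X. rho_converges FF \<rho> X f' F x" using B unfolding FinBW_def by simp
  then obtain F x where F: "F \<in> FF" "x \<in> topspace X" and conv: "rho_converges FF \<rho> X f' F x" by blast
  have cv: "\<exists>K. finite K \<and> f' ` \<rho> (F - K) \<subseteq> U" if "openin X U" "x \<in> U" for U
    using conv that unfolding rho_converges_def by simp
  have "rho_converges FF \<rho> Y f F (g x)"
    unfolding rho_converges_def
  proof (intro allI impI)
    fix U assume U: "openin Y U \<and> g x \<in> U"
    have o: "openin X {z \<in> topspace X. g z \<in> U}" using c U unfolding continuous_map_def by blast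
    have "x \<in> {z \<in> topspace X. g z \<in> U}" using F(2) U by blast
    from cv[OF o this] obtain K where K: "finite K" "f' ` \<rho> (F - K) \<subseteq> {z \<in> topspace X. g z \<in> U}" by blast
    have "f ` \<rho> (F - K) \<subseteq> U"
    proof
      fix b assume "b \<in> f ` \<rho> (F - K)"
      then obtain a where a: "a \<in> \<rho> (F - K)" "b = f a" by blast
      then have "g (f' a) \<in> U" using K(2) by blast
      then show "b \<in> U" using f' a(2) by simp
    qed
    then show "\<exists>K. finite K \<and> f ` \<rho> (F - K) \<subseteq> U" using K(1) by blast
  qed
  moreover have "g x \<in> topspace Y" using F(2) s by blast
  ultimately show "\<exists>F\<in>FF. \<exists>x\<in>topspace Y. rho_converges FF \<rho> Y f F x" using F(1) by blast
qed

lemma c1_c2: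
  assumes infx: "infinite (UNIV :: 'x set)"
    and c1: "\<forall>X :: 'x topology. Hausdorff_space X \<longrightarrow> (FinBW FF \<rho> X \<longleftrightarrow> finite (topspace X))"
  shows "\<not> FinBW FF \<rho> (euclidean :: enat topology)"
proof
  assume B: "FinBW FF \<rho> (euclidean :: enat topology)"
  obtain s :: "nat \<Rightarrow> 'x" where s: "inj s" using infinite_countable_subset[OF infx] by blast
  define e :: "enat \<Rightarrow> 'x" where "e = s \<circ> to_nat"
  have inje: "inj e" unfolding e_def using s inj_to_nat by (rule inj_compose)
  define X where "X = pullback_topology (range e) (inv e) (euclidean :: enat topology)"
  have oX: "openin X S \<longleftrightarrow> (\<exists>U. open U \<and> S = inv e -` U \<inter> range e)" for S
    unfolding X_def openin_pullback_topology by simp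
  have tX: "topspace X = range e" unfolding X_def topspace_pullback_topology by simp
  have ie: "inv e (e a) = a" for a using inje by (rule inv_f_f)
  have H: "Hausdorff_space X"
    unfolding Hausdorff_space_def
  proof (intro allI impI)
    fix x y assume xy: "x \<in> topspace X \<and> y \<in> topspace X \<and> x \<noteq> y"
    then obtain a b where ab: "x = e a" "y = e b" "a \<noteq> b" using tX by auto
    obtain U V where UV: "open U" "open V" "a \<in> U" "b \<in> V" "U \<inter> V = {}" using hausdorff[OF ab(3)] by blast
    show "\<exists>U V. openin X U \<and> openin X V \<and> x \<in> U \<and> y \<in> V \<and> disjnt U V"
      apply (rule exI[of _ "inv e -` U \<inter> range e"], rule exI[of _ "inv e -` V \<inter> range e"])
      using UV ab ie unfolding oX disjnt_def by auto
  qed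
  have "infinite (range e)" using inje infinite_UNIV_char_0 by (metis finite_imageD)
  moreover have "FinBW FF \<rho> X \<longleftrightarrow> finite (topspace X)" using c1 H by blast
  ultimately have "\<not> FinBW FF \<rho> X" using tX by simp
  moreover have "FinBW FF \<rho> X"
  proof (rule FinBW_image[OF _ _ B])
    show "continuous_map euclidean X e"
      unfolding continuous_map_def
    proof (intro conjI allI impI)
      show "e \<in> topspace euclidean \<rightarrow> topspace X" using tX by auto
      fix S assume "openin X S"
      then obtain U where U: "open U" "S = inv e -` U \<inter> range e" using oX by blast
      have "{x \<in> topspace euclidean. e x \<in> S} = U" using U ie by auto
      then show "openin euclidean {x \<in> topspace euclidean. e x \<in> S}" using U by simp
    qed
    show "e ` topspace euclidean = topspace X" using tX by simp
  qed
  ultimately show False by blast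
qed

lemma c3_c1:
  assumes "\<not> P_minus FF \<rho>"
  shows "\<forall>X :: 'x topology. Hausdorff_space X \<longrightarrow> (FinBW FF \<rho> X \<longleftrightarrow> finite (topspace X))"
proof (intro allI impI)
  fix X :: "'x topology" assume H: "Hausdorff_space X"
  obtain A where W: "witness A" using assms notP_witness by blast
  show "FinBW FF \<rho> X \<longleftrightarrow> finite (topspace X)"
    using finite_FinBW infinite_not_FinBW[OF W H] by blast
qed

end

context prloc begin

definition refines :: "'o set \<Rightarrow> 'o set \<Rightarrow> bool" where
  "refines G F \<longleftrightarrow> (\<forall>K. finite K \<longrightarrow> (\<exists>L. finite L \<and> \<rho> (G - L) \<subseteq> \<rho> (F - K)))"

definition leaving :: "'o set \<Rightarrow> bool" where
  "leaving E \<longleftrightarrow> (\<forall>a\<in>\<rho> E. \<exists>K. finite K \<and> a \<notin> \<rho> (E - K))"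

lemma refinesD: "refines G F \<Longrightarrow> finite K \<Longrightarrow> \<exists>L. finite L \<and> \<rho> (G - L) \<subseteq> \<rho> (F - K)"
  unfolding refines_def by simp

lemma refines_trans: assumes "refines G F" "refines F H" shows "refines G H"
  unfolding refines_def
proof (intro allI impI)
  fix K :: "'o set" assume "finite K"
  obtain L where L: "finite L" "\<rho> (F - L) \<subseteq> \<rho> (H - K)" using refinesD[OF assms(2) \<open>finite K\<close>] by blast
  obtain M where M: "finite M" "\<rho> (G - M) \<subseteq> \<rho> (F - L)" using refinesD[OF assms(1) L(1)] by blast
  show "\<exists>L. finite L \<and> \<rho> (G - L) \<subseteq> \<rho> (H - K)" using L M by blast
qed

lemma refines_sub: assumes "G \<in> FF" "F \<in> FF" "G \<subseteq> F" shows "refines G F"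
  unfolding refines_def
proof (intro allI impI)
  fix K :: "'o set" assume K: "finite K"
  have "\<rho> (G - K) \<subseteq> \<rho> (F - K)" using assms K by (intro mono FF_diff) auto
  then show "\<exists>L. finite L \<and> \<rho> (G - L) \<subseteq> \<rho> (F - K)" using K by blast
qed

lemma refines_refl: "refines F F"
  unfolding refines_def by blast

lemma step:
  assumes S1: "S1 FF \<rho>" and W: "witness A" and E: "E \<in> FF"
  shows "\<exists>E' n'. E' \<in> FF \<and> refines E' E \<and> n < n' \<and> \<rho> E' \<subseteq> A n - CC A \<and> leaving E' \<and>
           (\<forall>K. finite K \<longrightarrow> \<not> \<rho> (E' - K) \<subseteq> A n')"
proof -
  have "\<exists>F\<in>FF. F \<subseteq> E \<and>
        (\<forall>B\<in>ideal_of FF \<rho>. \<exists>G\<in>FF. \<rho> G \<subseteq> \<rho> F - B \<and>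
           (\<forall>K. finite K \<longrightarrow> (\<exists>L. finite L \<and> \<rho> (G - L) \<subseteq> \<rho> (F - K))))"
    using S1[unfolded S1_def] E by (rule bspec)
  then obtain F where F: "F \<in> FF" and FS0: "F \<subseteq> E \<and>
        (\<forall>B\<in>ideal_of FF \<rho>. \<exists>G\<in>FF. \<rho> G \<subseteq> \<rho> F - B \<and>
           (\<forall>K. finite K \<longrightarrow> (\<exists>L. finite L \<and> \<rho> (G - L) \<subseteq> \<rho> (F - K))))"
    by (rule bexE)
  have FE: "F \<subseteq> E" using FS0 by (rule conjunct1)
  have FS: "\<forall>B\<in>ideal_of FF \<rho>. \<exists>G\<in>FF. \<rho> G \<subseteq> \<rho> F - B \<and>
           (\<forall>K. finite K \<longrightarrow> (\<exists>L. finite L \<and> \<rho> (G - L) \<subseteq> \<rho> (F - K)))" using FS0 by (rule conjunct2)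
  define B where "B = CC A \<union> (UNIV - A n)"
  have B: "B \<in> ideal_of FF \<rho>" unfolding B_def by (rule I_Un[OF CC_I[OF W] compl_I[OF W]])
  have "\<exists>G\<in>FF. \<rho> G \<subseteq> \<rho> F - B \<and> (\<forall>K. finite K \<longrightarrow> (\<exists>L. finite L \<and> \<rho> (G - L) \<subseteq> \<rho> (F - K)))"
    using FS B by (rule bspec)
  then obtain G where G: "G \<in> FF" and G0: "\<rho> G \<subseteq> \<rho> F - B \<and> (\<forall>K. finite K \<longrightarrow> (\<exists>L. finite L \<and> \<rho> (G - L) \<subseteq> \<rho> (F - K)))"
    by (rule bexE)
  have GB: "\<rho> G \<subseteq> \<rho> F - B" using G0 by (rule conjunct1)
  have GF: "refines G F" unfolding refines_def using G0 by (rule conjunct2)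
  obtain G' where G': "G' \<in> FF" and G'0: "G' \<subseteq> G \<and> (\<forall>a\<in>\<rho> G'. \<exists>K. finite K \<and> a \<notin> \<rho> (G' - K))"
    using S[OF G] by (rule bexE)
  have G'G: "G' \<subseteq> G" using G'0 by (rule conjunct1)
  have lv: "leaving G'" unfolding leaving_def using G'0 by (rule conjunct2)
  have "\<not> (\<forall>n. \<exists>K. finite K \<and> \<rho> (G' - K) \<subseteq> A n)" using witnessD(4)[OF W G'] by blast
  then obtain n' where n': "\<forall>K. finite K \<longrightarrow> \<not> \<rho> (G' - K) \<subseteq> A n'" by blast
  have rG'G: "\<rho> G' \<subseteq> \<rho> G" by (rule mono[OF G' G G'G])
  have rG': "\<rho> G' \<subseteq> A n - CC A" using rG'G GB unfolding B_def by blast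
  have "n < n'"
  proof (rule ccontr)
    assume "\<not> n < n'"
    then have "A n \<subseteq> A n'" using dec_le[of A n' n] witnessD(2)[OF W] by simp
    then have "\<rho> G' \<subseteq> A n'" using rG' by blast
    then have "\<rho> (G' - {}) \<subseteq> A n'" by simp
    then show False using n' by blast
  qed
  have ref: "refines G' E"
    by (rule refines_trans[OF refines_sub[OF G' G G'G] refines_trans[OF GF refines_sub[OF F E FE]]])
  show ?thesis
    by (rule exI[of _ G'], rule exI[of _ n']) (use G' ref \<open>n < n'\<close> rG' lv n' in simp)
qed

lemma c3_c4:
  assumes S1: "S1 FF \<rho>" and nP: "\<not> P_minus FF \<rho>"
  shows "katetov_le FIN2_plus (\<lambda>A. A) FF \<rho>"
proof -
  obtain A where W: "witness A" using nP notP_witness by blast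
  define Pst where "Pst E n E' n' \<longleftrightarrow> E' \<in> FF \<and> refines E' E \<and> n < n' \<and> \<rho> E' \<subseteq> A n - CC A \<and> leaving E' \<and>
           (\<forall>K. finite K \<longrightarrow> \<not> \<rho> (E' - K) \<subseteq> A n')" for E n E' n'
  define nxt where "nxt p = (SOME q. Pst (fst p) (snd p) (fst q) (snd q))" for p :: "'o set \<times> nat"
  have nxtP: "Pst (fst p) (snd p) (fst (nxt p)) (snd (nxt p))" if fp: "fst p \<in> FF" for p
  proof -
    obtain E' n' where "Pst (fst p) (snd p) E' n'"
      using step[OF S1 W fp, of "snd p"] unfolding Pst_def by blast
    then have "Pst (fst p) (snd p) (fst (E', n')) (snd (E', n'))" by simp
    then show ?thesis unfolding nxt_def by (rule someI)
  qed
  define h where "h a = (lev A a, to_nat a)" for a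
  have injh: "inj h" unfolding inj_def h_def by (auto dest: inj_onD[OF inj_to_nat])
  define Kc where "Kc j = {x :: 'o. to_nat x < j}" for j
  have Kcfin: "finite (Kc j)" for j
  proof -
    have "Kc j = to_nat -` {..<j}" by (auto simp: Kc_def)
    then show ?thesis using finite_vimageI[OF _ inj_to_nat, of "{..<j}"] by simp
  qed
  have Kcmono: "i \<le> j \<Longrightarrow> Kc i \<subseteq> Kc j" for i j by (auto simp: Kc_def)
  have Kcbig: "\<exists>j. K \<subseteq> Kc j" if fK: "finite K" for K
  proof -
    obtain j where "to_nat ` K \<subseteq> {..<j}" using finite_nat_bounded[OF finite_imageI[OF fK]] by blast
    then have "K \<subseteq> Kc j" by (auto simp: Kc_def)
    then show ?thesis by blast
  qed
  show ?thesis unfolding katetov_le_def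
  proof (rule exI[of _ h], intro ballI)
    fix F1 assume F1: "F1 \<in> FF"
    define sq where "sq = rec_nat (F1, 0) (\<lambda>_ p. nxt p)"
    have sq0: "sq 0 = (F1, 0)" and sqS: "sq (Suc k) = nxt (sq k)" for k by (simp_all add: sq_def)
    have sqFF: "fst (sq k) \<in> FF" for k
    proof (induction k)
      case 0 then show ?case using F1 by (simp add: sq0)
    next
      case (Suc k)
      have "Pst (fst (sq k)) (snd (sq k)) (fst (nxt (sq k))) (snd (nxt (sq k)))" by (rule nxtP[OF Suc.IH])
      then show ?case by (simp add: sqS Pst_def)
    qed
    have sqP: "Pst (fst (sq k)) (snd (sq k)) (fst (sq (Suc k))) (snd (sq (Suc k)))" for k
      using nxtP[OF sqFF[of k]] by (simp add: sqS)
    define E where "E k = fst (sq (Suc k))" for k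
    define nn where "nn k = snd (sq k)" for k
    have EFF: "E k \<in> FF" and Eref: "refines (E k) (fst (sq k))" and nlt: "nn k < nn (Suc k)"
      and Esub: "\<rho> (E k) \<subseteq> A (nn k) - CC A" and Elv: "leaving (E k)"
      and Enot: "\<forall>K. finite K \<longrightarrow> \<not> \<rho> (E k - K) \<subseteq> A (nn (Suc k))" for k
      using sqP[of k] unfolding Pst_def E_def nn_def by simp_all
    have sqref: "refines (fst (sq k)) F1" for k
    proof (induction k)
      case 0 then show ?case by (simp add: sq0 refines_refl)
    next
      case (Suc k) then show ?case using refines_trans[OF Eref[of k]] by (simp add: E_def)
    qed
    have Eref1: "refines (E k) F1" for k by (rule refines_trans[OF Eref sqref])
    have nnk: "k \<le> nn k" for k
    proof (induction k)
      case 0 then show ?case by simp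
    next
      case (Suc k) then show ?case using nlt[of k] by simp
    qed
    define L where "L k = (SOME L. finite L \<and> \<rho> (E k - L) \<subseteq> \<rho> (F1 - Kc k))" for k
    have L: "finite (L k) \<and> \<rho> (E k - L k) \<subseteq> \<rho> (F1 - Kc k)" for k
    proof -
      have "\<exists>L. finite L \<and> \<rho> (E k - L) \<subseteq> \<rho> (F1 - Kc k)" by (rule refinesD[OF Eref1 Kcfin])
      then show ?thesis unfolding L_def by (rule someI_ex)
    qed
    define p where "p k j = (SOME a. a \<in> \<rho> (E k - (L k \<union> Kc j)) \<and> a \<notin> A (nn (Suc k)))" for k j
    have p: "p k j \<in> \<rho> (E k - (L k \<union> Kc j)) \<and> p k j \<notin> A (nn (Suc k))" for k j
    proof -
      have "finite (L k \<union> Kc j)" using L Kcfin by simp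
      then have "\<not> \<rho> (E k - (L k \<union> Kc j)) \<subseteq> A (nn (Suc k))" using Enot by blast
      then have "\<exists>a. a \<in> \<rho> (E k - (L k \<union> Kc j)) \<and> a \<notin> A (nn (Suc k))" by blast
      then show ?thesis unfolding p_def by (rule someI_ex)
    qed
    have pE: "p k j \<in> \<rho> (E k)" for k j
    proof -
      have "\<rho> (E k - (L k \<union> Kc j)) \<subseteq> \<rho> (E k)"
        using L Kcfin by (intro mono FF_diff EFF) auto
      then show ?thesis using p by blast
    qed
    have plev: "nn k \<le> lev A (p k j) \<and> lev A (p k j) < nn (Suc k)" for k j
    proof
      have a: "p k j \<in> A (nn k)" "p k j \<notin> CC A" using pE Esub by blast+
      show "nn k \<le> lev A (p k j)" by (rule lev_ge[OF witnessD(1)[OF W] _ a]) (use witnessD(2)[OF W] in blast)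
      obtain m where m: "nn (Suc k) = Suc m" using nlt[of k] by (cases "nn (Suc k)") auto
      have "p k j \<notin> A (Suc m)" using p[of k j] m by metis
      then have "lev A (p k j) \<le> m" by (rule lev_le)
      then show "lev A (p k j) < nn (Suc k)" using m by simp
    qed
    have pinf: "infinite (range (p k))" for k
    proof
      assume fin: "finite (range (p k))"
      have "\<forall>a\<in>range (p k). \<exists>K. finite K \<and> a \<notin> \<rho> (E k - K)"
        using Elv[of k] pE unfolding leaving_def by blast
      then have "\<exists>Kf. \<forall>a\<in>range (p k). finite (Kf a) \<and> a \<notin> \<rho> (E k - Kf a)" by (rule bchoice)
      then obtain Kf where Kf: "\<forall>a\<in>range (p k). finite (Kf a) \<and> a \<notin> \<rho> (E k - Kf a)" by (elim exE)
      have "finite (\<Union>a\<in>range (p k). Kf a)" using fin Kf by blast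
      then obtain j where j: "(\<Union>a\<in>range (p k). Kf a) \<subseteq> Kc j" using Kcbig by blast
      have Kfa: "finite (Kf (p k j))" "p k j \<notin> \<rho> (E k - Kf (p k j))" using Kf by blast+
      have "Kf (p k j) \<subseteq> L k \<union> Kc j" using j by blast
      then have "\<rho> (E k - (L k \<union> Kc j)) \<subseteq> \<rho> (E k - Kf (p k j))"
        using L Kcfin by (intro mono_diff[OF EFF Kfa(1)]) auto
      then show False using p Kfa(2) by blast
    qed
    define F2 where "F2 = (\<lambda>(k, j). h (p k j)) ` UNIV"
    have F2plus: "F2 \<in> FIN2_plus"
      unfolding FIN2_plus_def FIN2_def
    proof (rule CollectI, rule notI, unfold mem_Collect_eq, elim exE)
      fix i0 assume fin: "\<forall>i\<ge>i0. finite {j. (i, j) \<in> F2}"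
      have sub: "h ` range (p i0) \<subseteq> (\<Union>i\<in>{nn i0..<nn (Suc i0)}. {i} \<times> {j. (i, j) \<in> F2})"
      proof
        fix z assume "z \<in> h ` range (p i0)"
        then obtain j where z: "z = h (p i0 j)" by blast
        have "z \<in> F2" unfolding F2_def z by (rule image_eqI[of _ _ "(i0, j)"]) simp_all
        moreover have "fst z \<in> {nn i0..<nn (Suc i0)}" using plev[of i0 j] by (simp add: z h_def)
        ultimately show "z \<in> (\<Union>i\<in>{nn i0..<nn (Suc i0)}. {i} \<times> {j. (i, j) \<in> F2})"
          by (cases z) auto
      qed
      have "finite (\<Union>i\<in>{nn i0..<nn (Suc i0)}. {i} \<times> {j. (i, j) \<in> F2})"
      proof (rule finite_UN_I)
        fix i assume "i \<in> {nn i0..<nn (Suc i0)}"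
        then have "i0 \<le> i" using nnk[of i0] by simp
        then show "finite ({i} \<times> {j. (i, j) \<in> F2})" using fin by simp
      qed simp
      then have "finite (h ` range (p i0))" using sub finite_subset by blast
      then have "finite (range (p i0))" using injh by (meson finite_imageD inj_on_subset subset_UNIV)
      then show False using pinf by blast
    qed
    have kat: "\<forall>K1. finite K1 \<longrightarrow> (\<exists>K2. finite K2 \<and> F2 - K2 \<subseteq> h ` \<rho> (F1 - K1))"
    proof (intro allI impI)
      fix K1 :: "'o set" assume K1: "finite K1"
      obtain m where m: "K1 \<subseteq> Kc m" using Kcbig K1 by blast
      have base: "\<rho> (F1 - Kc m) \<subseteq> \<rho> (F1 - K1)" by (rule mono_diff[OF F1 K1 Kcfin m])
      have exJ: "\<exists>j. \<rho> (E k - Kc j) \<subseteq> \<rho> (F1 - Kc m)" for k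
      proof -
        obtain L' where L': "finite L'" "\<rho> (E k - L') \<subseteq> \<rho> (F1 - Kc m)" using refinesD[OF Eref1 Kcfin] by blast
        obtain j where j: "L' \<subseteq> Kc j" using Kcbig[OF L'(1)] by blast
        have "\<rho> (E k - Kc j) \<subseteq> \<rho> (E k - L')" by (rule mono_diff[OF EFF L'(1) Kcfin j])
        then show ?thesis using L'(2) by blast
      qed
      define J where "J k = (SOME j. \<rho> (E k - Kc j) \<subseteq> \<rho> (F1 - Kc m))" for k
      have J: "\<rho> (E k - Kc (J k)) \<subseteq> \<rho> (F1 - Kc m)" for k unfolding J_def by (rule someI_ex[OF exJ])
      define K2 where "K2 = (\<lambda>(k, j). h (p k j)) ` (SIGMA k:{..<m}. {..<J k})"
      have K2fin: "finite K2" unfolding K2_def by (intro finite_imageI finite_SigmaI) auto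
      have "F2 - K2 \<subseteq> h ` \<rho> (F1 - K1)"
      proof
        fix z assume z: "z \<in> F2 - K2"
        then obtain k j where kj: "z = h (p k j)" unfolding F2_def by auto
        have nk: "\<not> (k < m \<and> j < J k)"
        proof
          assume "k < m \<and> j < J k"
          then have "z \<in> K2" unfolding K2_def kj by (intro image_eqI[of _ _ "(k, j)"]) auto
          then show False using z by blast
        qed
        have "p k j \<in> \<rho> (F1 - Kc m)"
        proof (cases "m \<le> k")
          case True
          have "\<rho> (E k - (L k \<union> Kc j)) \<subseteq> \<rho> (E k - L k)"
            using L Kcfin by (intro mono_diff[OF EFF]) auto
          also have "\<dots> \<subseteq> \<rho> (F1 - Kc k)" using L by blast
          also have "\<dots> \<subseteq> \<rho> (F1 - Kc m)" by (rule mono_diff[OF F1 Kcfin Kcfin Kcmono[OF True]])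
          finally show ?thesis using p by blast
        next
          case False
          then have "J k \<le> j" using nk by simp
          then have "Kc (J k) \<subseteq> L k \<union> Kc j" using Kcmono by blast
          then have "\<rho> (E k - (L k \<union> Kc j)) \<subseteq> \<rho> (E k - Kc (J k))"
            using L Kcfin by (intro mono_diff[OF EFF]) auto
          also have "\<dots> \<subseteq> \<rho> (F1 - Kc m)" by (rule J)
          finally show ?thesis using p by blast
        qed
        then show "z \<in> h ` \<rho> (F1 - K1)" using base kj by blast
      qed
      then show "\<exists>K2. finite K2 \<and> F2 - K2 \<subseteq> h ` \<rho> (F1 - K1)" using K2fin by blast
    qed
    show "\<exists>F2\<in>FIN2_plus. \<forall>K1. finite K1 \<longrightarrow> (\<exists>K2. finite K2 \<and> F2 - K2 \<subseteq> h ` \<rho> (F1 - K1))"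
      by (rule bexI[where x=F2], rule kat, rule F2plus)
  qed
qed

end

theorem theorem3p1:
  fixes FF :: "'o::countable set set" and \<rho> :: "'o set \<Rightarrow> 'l::countable set"
  assumes "infinite (UNIV :: 'o set)" and "infinite (UNIV :: 'l set)"
    and "infinite (UNIV :: 'x set)"
    and "partition_regular FF \<rho>"
  defines "c1 \<equiv> (\<forall>X :: 'x topology. Hausdorff_space X \<longrightarrow>
                    (FinBW FF \<rho> X \<longleftrightarrow> finite (topspace X)))"
    and "c2 \<equiv> \<not> FinBW FF \<rho> (euclidean :: enat topology)"
    and "c3 \<equiv> \<not> P_minus FF \<rho>"
    and "c4 \<equiv> katetov_le FIN2_plus (\<lambda>A. A) FF \<rho>"
  shows "(c1 \<longleftrightarrow> c2) \<and> (c2 \<longleftrightarrow> c3) \<and> (c4 \<longrightarrow> c2) \<and> (S1 FF \<rho> \<longrightarrow> (c2 \<longleftrightarrow> c4))"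
proof -
  interpret prloc FF \<rho> by (rule prloc.intro) (rule assms(4))
  have h23: "c2 \<longleftrightarrow> c3" unfolding c2_def c3_def using c3_c2 c2_c3 by blast
  have h12: "c1 \<longleftrightarrow> c2"
  proof
    assume "c1" then show "c2" unfolding c1_def c2_def by (rule c1_c2[OF assms(3)])
  next
    assume "c2" then have "c3" using h23 by simp
    then show "c1" unfolding c1_def c3_def by (rule c3_c1)
  qed
  have h42: "c4 \<longrightarrow> c2" unfolding c4_def c2_def using c4_c3 c3_c2 by blast
  have hS: "S1 FF \<rho> \<longrightarrow> (c2 \<longleftrightarrow> c4)"
  proof
    assume S: "S1 FF \<rho>"
    show "c2 \<longleftrightarrow> c4"
    proof
      assume "c2" then have "c3" using h23 by simp
      then show "c4" unfolding c3_def c4_def by (rule c3_c4[OF S])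
    next
      assume "c4" then show "c2" using h42 by simp
    qed
  qed
  show ?thesis using h12 h23 h42 hS by blast
qed

end
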